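(* Let $d=\mu_+-\mu_-$, $\epsilon\in[0,d/4]$ and $K\in(1,\bar B_K(\epsilon))$, where $\bar B_K(\epsilon)=\min\{\exp((d-2\epsilon)^2/2),\ \phi^{-1}(d/\epsilon-2)\}$, $\phi:[1,\infty)\to[2,\infty)$, $\phi(x)=x+1/x$ (with $\phi^{-1}(+\infty):=+\infty$ when $\epsilon=0$). Define $$g(\epsilon;\theta,K)=\frac1K\exp\!\left(-\frac{(\theta+\epsilon-\mu_+)^2}{2K^2}\right)-\exp\!\left(-\frac{(\theta-\epsilon-\mu_-)^2}{2}\right).$$ Then for every $\theta\in[\theta_{\mathrm f},\theta^{(\epsilon)}_{\mathrm r}]$, $g(\epsilon;\theta,K)\le g(0;\theta,K)$.
   Context: Setting (one-dimensional Gaussian mixture). Fix real numbers $\mu_-<\mu_+$ and $K>1$, and let $d=\mu_+-\mu_-$. Let $(X,Y)$ be a random pair with $\Pr(Y=1)=\Pr(Y=-1)=\tfrac12$, $X\mid Y=-1\sim\mathcal N(\mu_-,1)$, and $X\mid Y=1\sim\mathcal N(\mu_+,K^2)$. For $\theta\in\mathbb R$, $f_\theta(x)=1$ if $x>\theta$ and $f_\theta(x)=-1$ otherwise. Class-conditional errors: $e_+(\theta)=\Pr(X\le\theta\mid Y=1)$, $e_-(\theta)=\Pr(X>\theta\mid Y=-1)$. For $\epsilon\ge0$, robust error: $R_{\mathrm{rob}}^{\epsilon}(\theta)=\tfrac12\Pr(X\le\theta+\epsilon\mid Y=1)+\tfrac12\Pr(X>\theta-\epsilon\mid Y=-1)$.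 $\theta_{\mathrm f}$ is the threshold in $[\mu_-,\mu_+]$ with $e_+(\theta_{\mathrm f})=e_-(\theta_{\mathrm f})$ (explicitly $\theta_{\mathrm f}=\mu_-+d/(K+1)$); $\theta^{(\epsilon)}_{\mathrm r}$ is the minimizer of $R^{\epsilon}_{\mathrm{rob}}$ over $[\mu_-,\mu_+]$. *)

theory Defs
  imports "HOL-Probability.Probability"
begin

definition gauss :: "real \<Rightarrow> real \<Rightarrow> real measure" where
  "gauss mu s = density lborel (normal_density mu s)"

text \<open>Robust error: 1/2 Pr(X \<le> theta+eps | Y=1) + 1/2 Pr(X > theta-eps | Y=-1),
  with X|Y=1 ~ N(mu_p, K^2) and X|Y=-1 ~ N(mu_m, 1).\<close>
definition R_rob :: "real \<Rightarrow> real \<Rightarrow> real \<Rightarrow> real \<Rightarrow> real \<Rightarrow> real" where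
  "R_rob mu_m mu_p K eps theta =
     1/2 * measure (gauss mu_p K) {..theta + eps} + 1/2 * measure (gauss mu_m 1) {theta - eps<..}"

definition theta_f :: "real \<Rightarrow> real \<Rightarrow> real \<Rightarrow> real" where
  "theta_f mu_m mu_p K = mu_m + (mu_p - mu_m) / (K + 1)"

definition phi :: "real \<Rightarrow> real" where
  "phi x = x + 1 / x"

definition phi_inv :: "real \<Rightarrow> real" where
  "phi_inv y = (THE x. 1 \<le> x \<and> phi x = y)"

text \<open>Upper bound on K; for eps = 0 the second term is +\<infinity>.\<close>
definition B_K :: "real \<Rightarrow> real \<Rightarrow> real \<Rightarrow> real" where
  "B_K mu_m mu_p eps =
     (if eps = 0 then exp ((mu_p - mu_m)^2 / 2)
      else min (exp ((mu_p - mu_m - 2 * eps)^2 / 2)) (phi_inv ((mu_p - mu_m) / eps - 2)))"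

definition g :: "real \<Rightarrow> real \<Rightarrow> real \<Rightarrow> real \<Rightarrow> real \<Rightarrow> real" where
  "g mu_m mu_p eps theta K =
     1 / K * exp (- ((theta + eps - mu_p)^2) / (2 * K^2)) - exp (- ((theta - eps - mu_m)^2) / 2)"

end

theory Submission
  imports Defs
begin


lemma gauss_prob: "0 < s \<Longrightarrow> prob_space (gauss mu s)"
  unfolding gauss_def by (rule prob_space_normal_density)

lemma gauss_sets[simp]: "sets (gauss mu s) = sets borel"
  unfolding gauss_def by simp

lemma gauss_fin: assumes s: "0 < s" shows "emeasure (gauss mu s) A \<noteq> \<infinity>"
proof
  assume "emeasure (gauss mu s) A = \<infinity>"
  moreover have "emeasure (gauss mu s) A \<le> 1"
    by (rule prob_space.emeasure_le_1[OF gauss_prob[OF s]])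
  ultimately have "(\<infinity>::ennreal) \<le> 1" by simp
  then show False by (simp add: top_unique)
qed

lemma gauss_Icc:
  assumes "a \<le> x" "0 < s"
  shows "measure (gauss mu s) {a..x} = integral {a..x} (normal_density mu s)"
proof -
  have cont: "continuous_on {a..x} (normal_density mu s)"
    unfolding normal_density_def using assms by (intro continuous_intros) auto
  have hi: "(normal_density mu s has_integral integral {a..x} (normal_density mu s)) {a..x}"
    using integrable_continuous_interval[OF cont] by (simp add: integrable_integral)
  have "emeasure (gauss mu s) {a..x} = (\<integral>\<^sup>+ y. ennreal (normal_density mu s y) * indicator {a..x} y \<partial>lborel)"
    unfolding gauss_def by (subst emeasure_density) auto
  also have "\<dots> = ennreal (integral {a..x} (normal_density mu s))"
    by (rule nn_integral_has_integral_lebesgue'[OF _ hi]) simp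
  finally have e: "emeasure (gauss mu s) {a..x} = ennreal (integral {a..x} (normal_density mu s))" .
  have nn: "0 \<le> integral {a..x} (normal_density mu s)"
    by (rule integral_nonneg[OF integrable_continuous_interval[OF cont]]) simp
  show ?thesis unfolding measure_def e using nn by simp
qed

lemma gauss_cdf_split:
  assumes "a \<le> x" "0 < s"
  shows "measure (gauss mu s) {..x} = measure (gauss mu s) {..<a} + integral {a..x} (normal_density mu s)"
proof -
  have "{..x} = {..<a} \<union> {a..x}" using assms by auto
  moreover have "measure (gauss mu s) ({..<a} \<union> {a..x}) = measure (gauss mu s) {..<a} + measure (gauss mu s) {a..x}"
    by (subst measure_Union) (use gauss_fin[OF assms(2)] in auto)
  ultimately have "measure (gauss mu s) {..x} = measure (gauss mu s) {..<a} + measure (gauss mu s) {a..x}"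
    by simp
  then show ?thesis using gauss_Icc[OF assms] by simp
qed

lemma gauss_tail: assumes s: "0 < s" shows "measure (gauss mu s) {c<..} = 1 - measure (gauss mu s) {..c}"
proof -
  have "UNIV = {..c} \<union> {c<..}" by auto
  moreover have "measure (gauss mu s) ({..c} \<union> {c<..}) = measure (gauss mu s) {..c} + measure (gauss mu s) {c<..}"
    by (subst measure_Union) (use gauss_fin[OF s] in auto)
  ultimately have "measure (gauss mu s) UNIV = measure (gauss mu s) {..c} + measure (gauss mu s) {c<..}"
    by simp
  moreover have "measure (gauss mu s) UNIV = 1"
    using prob_space.prob_space[OF gauss_prob[OF s]] by (simp add: gauss_def)
  ultimately show ?thesis by simp
qed

lemma gauss_cdf_deriv:
  assumes "0 < s" shows "((\<lambda>x. measure (gauss mu s) {..x}) has_real_derivative normal_density mu s y) (at y)"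
proof -
  let ?f = "normal_density mu s"
  have cont: "continuous_on {y-1..y+1} ?f"
    unfolding normal_density_def using assms by (intro continuous_intros) auto
  have "((\<lambda>x. integral {y-1..x} ?f) has_real_derivative ?f y) (at y within {y-1..y+1})"
    by (rule integral_has_real_derivative[OF cont]) auto
  then have "((\<lambda>x. integral {y-1..x} ?f) has_real_derivative ?f y) (at y)"
    by (simp add: at_within_Icc_at)
  then have d: "((\<lambda>x. measure (gauss mu s) {..<y-1} + integral {y-1..x} ?f) has_real_derivative ?f y) (at y)"
    by (auto intro!: derivative_eq_intros)
  show ?thesis
  proof (rule has_field_derivative_transform_within_open[OF d, of "{y-1<..}"])
    fix x :: real assume "x \<in> {y-1<..}"
    then show "measure (gauss mu s) {..<y - 1} + integral {y - 1..x} ?f = measure (gauss mu s) {..x}"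
      using gauss_cdf_split[where a="y-1" and x=x and s=s and mu=mu] assms by simp
  qed auto
qed


lemma R_rob_deriv:
  assumes K: "0 < K"
  shows "(R_rob mu_m mu_p K eps has_real_derivative
           (1/2 * normal_density mu_p K (t + eps) - 1/2 * normal_density mu_m 1 (t - eps))) (at t)"
proof -
  have e: "R_rob mu_m mu_p K eps = (\<lambda>t. 1/2 * measure (gauss mu_p K) {..t + eps}
      + 1/2 * (1 - measure (gauss mu_m 1) {..t - eps}))"
    by (rule ext) (simp add: R_rob_def gauss_tail K)
  have d1: "((\<lambda>t. measure (gauss mu_p K) {..t + eps}) has_real_derivative normal_density mu_p K (t + eps)) (at t)"
  proof -
    have i: "((\<lambda>t. t + eps) has_real_derivative 1) (at t)" by (auto intro!: derivative_eq_intros)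
    have o: "((\<lambda>x. measure (gauss mu_p K) {..x}) has_real_derivative normal_density mu_p K (t + eps)) (at ((\<lambda>t. t + eps) t))"
      using gauss_cdf_deriv[OF K] by simp
    show ?thesis using DERIV_chain2[OF o i] by simp
  qed
  have d2: "((\<lambda>t. measure (gauss mu_m 1) {..t - eps}) has_real_derivative normal_density mu_m 1 (t - eps)) (at t)"
  proof -
    have i: "((\<lambda>t. t - eps) has_real_derivative 1) (at t)" by (auto intro!: derivative_eq_intros)
    have o: "((\<lambda>x. measure (gauss mu_m 1) {..x}) has_real_derivative normal_density mu_m 1 (t - eps)) (at ((\<lambda>t. t - eps) t))"
      using gauss_cdf_deriv[of 1] by simp
    show ?thesis using DERIV_chain2[OF o i] by simp
  qed
  show ?thesis unfolding e
    by (auto intro!: derivative_eq_intros d1 d2)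
qed

lemma nd_g:
  assumes "0 < K"
  shows "1/2 * normal_density mu_p K (t + eps) - 1/2 * normal_density mu_m 1 (t - eps)
       = 1 / (2 * sqrt (2*pi)) * g mu_m mu_p eps t K"
proof -
  have "sqrt (2 * pi * K\<^sup>2) = sqrt (2*pi) * K" using assms by (simp add: real_sqrt_mult)
  then show ?thesis using assms
    by (simp add: normal_density_def g_def field_simps)
qed

definition Q :: "real \<Rightarrow> real \<Rightarrow> real \<Rightarrow> real \<Rightarrow> real \<Rightarrow> real" where
  "Q mu_m mu_p eps K t = (t - eps - mu_m)^2 - (t + eps - mu_p)^2 / K^2 - 2 * ln K"

lemma g_pos_iff:
  assumes "0 < K"
  shows "0 < g mu_m mu_p eps t K \<longleftrightarrow> 0 < Q mu_m mu_p eps K t"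
proof -
  have "1 / K * exp (- ((t + eps - mu_p)^2) / (2 * K^2)) = exp (- ((t + eps - mu_p)^2) / (2 * K^2) - ln K)"
    using assms by (simp add: exp_diff)
  then have "0 < g mu_m mu_p eps t K \<longleftrightarrow>
     - ((t - eps - mu_m)^2) / 2 < - ((t + eps - mu_p)^2) / (2 * K^2) - ln K"
    unfolding g_def by simp
  also have "\<dots> \<longleftrightarrow> 0 < Q mu_m mu_p eps K t"
    unfolding Q_def using assms by (simp add: field_simps)
  finally show ?thesis .
qed

lemma quad_identity:
  fixes a b c L t e0 th :: real
  shows "(t - e0) * ((th - a)^2 - c * (th - b)^2 - L) - (t - th) * ((e0 - a)^2 - c * (e0 - b)^2 - L)
       - (th - e0) * ((t - a)^2 - c * (t - b)^2 - L)
      = - ((1 - c) * ((t - e0) * (t - th) * (th - e0)))"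
  by (simp add: algebra_simps power2_eq_square)
lemma Q_alt: "Q mu_m mu_p eps K x = (x - (eps + mu_m))^2 - (1/K^2) * (x - (mu_p - eps))^2 - 2 * ln K"
  unfolding Q_def by (simp add: algebra_simps)
lemma Q_identity:
  shows "(t - e0) * Q mu_m mu_p eps K th - (t - th) * Q mu_m mu_p eps K e0 - (th - e0) * Q mu_m mu_p eps K t
      = - ((1 - 1/K^2) * ((t - e0) * (t - th) * (th - e0)))"
  unfolding Q_alt by (rule quad_identity)

lemma Q_convex:
  assumes K: "1 < K" and "Q mu_m mu_p eps K th > 0" "Q mu_m mu_p eps K e0 < 0" "e0 < th" "th \<le> t"
  shows "Q mu_m mu_p eps K t > 0"
proof -
  have c: "0 \<le> 1 - 1/K^2" using K by (simp add: field_simps)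
  have "0 \<le> (1 - 1/K^2) * ((t - e0) * (t - th) * (th - e0))"
    using assms c by (intro mult_nonneg_nonneg) auto
  then have "(th - e0) * Q mu_m mu_p eps K t \<ge> (t - e0) * Q mu_m mu_p eps K th - (t - th) * Q mu_m mu_p eps K e0"
    using Q_identity[of t e0 mu_m mu_p eps K th] K by linarith
  moreover have "(t - e0) * Q mu_m mu_p eps K th > 0" using assms by simp
  moreover have "(t - th) * Q mu_m mu_p eps K e0 \<le> 0" using assms by (simp add: mult_nonneg_nonpos)
  ultimately have "(th - e0) * Q mu_m mu_p eps K t > 0" by linarith
  then show ?thesis using assms by (simp add: zero_less_mult_iff)
qed

lemma phi_mono:
  assumes "1 \<le> a" "a < b" shows "phi a < phi b"
proof -
  have "1/a - 1/b = (b - a) / (a*b)" using assms by (simp add: field_simps)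
  also have "\<dots> < b - a"
  proof -
    have "1 * b \<le> a * b" using assms by (intro mult_right_mono) auto
    then have "1 < a * b" using assms by linarith
    then show ?thesis using assms by (simp add: divide_less_eq)
  qed
  finally show ?thesis unfolding phi_def by simp
qed

lemma phi_inv_prop:
  assumes "2 \<le> y" shows "1 \<le> phi_inv y \<and> phi (phi_inv y) = y"
proof -
  define r where "r = sqrt (y^2 - 4)"
  have yy: "2*2 \<le> y*y" by (rule mult_mono) (use assms in auto)
  have r0: "0 \<le> r" unfolding r_def using yy by (simp add: power2_eq_square)
  from yy have r2: "r^2 = y^2 - 4" unfolding r_def
    by (simp add: power2_eq_square)
  define x0 where "x0 = (y + r) / 2"
  have x1: "1 \<le> x0" unfolding x0_def using assms r0 by simp
  have "phi x0 = y"
  proof -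
    have "(y + r) * (y - r) = 4" using r2 by (simp add: algebra_simps power2_eq_square)
    then have inv: "1 / x0 = (y - r) / 2" unfolding x0_def using x1 x0_def
      by (auto simp: field_simps)
    show ?thesis unfolding phi_def inv by (simp add: x0_def field_simps)
  qed
  have ex: "\<exists>!x. 1 \<le> x \<and> phi x = y"
  proof
    show "1 \<le> x0 \<and> phi x0 = y" using x1 \<open>phi x0 = y\<close> by simp
  next
    fix x assume x: "1 \<le> x \<and> phi x = y"
    show "x = x0"
    proof (rule ccontr)
      assume "x \<noteq> x0"
      then have "x < x0 \<or> x0 < x" by auto
      then show False using phi_mono x x1 \<open>phi x0 = y\<close> by fastforce
    qed
  qed
  show ?thesis unfolding phi_inv_def using theI'[OF ex] .
qed

lemma K_bound:
  assumes "0 < eps" "eps \<le> d / 4" "1 < K" "K < phi_inv (d / eps - 2)"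
  shows "eps * (K + 1)^2 < K * d"
proof -
  have y: "2 \<le> d / eps - 2" using assms by (simp add: field_simps)
  have "phi K < phi (phi_inv (d / eps - 2))"
    using phi_mono[of K] assms by simp
  then have "K + 1/K < d / eps - 2" using phi_inv_prop[OF y] unfolding phi_def by simp
  then have "K + 2 + 1/K < d / eps" by simp
  then have "eps * (K + 2 + 1/K) < d" using assms by (simp add: field_simps)
  then have "K * (eps * (K + 2 + 1/K)) < K * d" using assms by simp
  moreover have "K * (eps * (K + 2 + 1/K)) = eps * (K + 1)^2" using assms
    by (simp add: field_simps power2_eq_square)
  ultimately show ?thesis by simp
qed


lemma psi_deriv:
  assumes K: "K \<noteq> 0"
  shows "((\<lambda>s. g mu_m mu_p s th K * exp (- ((th - mu_m) * s - s^2/2))) has_real_derivative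
     (1/K * exp (- ((th + s - mu_p)^2) / (2 * K^2)) * exp (- ((th - mu_m) * s - s^2/2))
       * ((mu_p - th - s) / K^2 - (th - mu_m - s)))) (at s)"
proof -
  have dA: "((\<lambda>s. - ((th + s - mu_p)^2) / (2 * K^2)) has_real_derivative (- (th + s - mu_p) / K^2)) (at s)"
    using K by (auto intro!: derivative_eq_intros simp: power2_eq_square field_simps)
  have dC: "((\<lambda>s. - ((th - s - mu_m)^2) / 2) has_real_derivative (th - s - mu_m)) (at s)"
    by (auto intro!: derivative_eq_intros simp: power2_eq_square field_simps)
  have dE: "((\<lambda>s. - ((th - mu_m) * s - s^2/2)) has_real_derivative (- (th - mu_m - s))) (at s)"
    by (auto intro!: derivative_eq_intros simp: power2_eq_square)
  have eA: "((\<lambda>s. exp (- ((th + s - mu_p)^2) / (2 * K^2))) has_real_derivative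
      exp (- ((th + s - mu_p)^2) / (2 * K^2)) * (- (th + s - mu_p) / K^2)) (at s)"
    using DERIV_chain2[OF DERIV_exp dA] .
  have eC: "((\<lambda>s. exp (- ((th - s - mu_m)^2) / 2)) has_real_derivative
      exp (- ((th - s - mu_m)^2) / 2) * (th - s - mu_m)) (at s)"
    using DERIV_chain2[OF DERIV_exp dC] .
  have eE: "((\<lambda>s. exp (- ((th - mu_m) * s - s^2/2))) has_real_derivative
      exp (- ((th - mu_m) * s - s^2/2)) * (- (th - mu_m - s))) (at s)"
    using DERIV_chain2[OF DERIV_exp dE] .
  note D = DERIV_mult[OF DERIV_diff[OF DERIV_cmult[OF eA, of "1/K"] eC] eE]
  have alg: "\<And>a c e. (1/K*(a*(-(th+s-mu_p)/K^2)) - c*(th-s-mu_m))*e + e * - (th - mu_m - s) * (1/K*a - c)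
       = 1/K*a*e*((mu_p-th-s)/K^2 - (th-mu_m-s))"
      using K by (simp add: field_simps)
  show ?thesis
    unfolding g_def
    apply (rule DERIV_cong[OF D])
    apply (rule alg)
    done
qed

theorem mainTheorem6:
  fixes mu_m mu_p eps K theta_r theta :: real
  assumes "mu_m < mu_p"
    and "0 \<le> eps" and "eps \<le> (mu_p - mu_m) / 4"
    and "1 < K" and "K < B_K mu_m mu_p eps"
    and "theta_r \<in> {mu_m..mu_p}"
    and "\<forall>t\<in>{mu_m..mu_p}. R_rob mu_m mu_p K eps theta_r \<le> R_rob mu_m mu_p K eps t"
    and "theta_f mu_m mu_p K \<le> theta" and "theta \<le> theta_r"
  shows "g mu_m mu_p eps theta K \<le> g mu_m mu_p 0 theta K"
proof -
  define d where "d = mu_p - mu_m"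
  have d0: "0 < d" using assms(1) unfolding d_def by simp
  have K0: "0 < K" using assms(4) by simp
  have key: "eps * (K + 1)^2 \<le> K * d"
  proof (cases "eps = 0")
    case True then show ?thesis using K0 d0 by simp
  next
    case False
    then have e0: "0 < eps" using assms(2) by simp
    have "K < phi_inv (d / eps - 2)" using assms(5) False unfolding B_K_def d_def by simp
    then have "eps * (K + 1)^2 < K * d"
      using K_bound[of eps d K] e0 assms(3,4) unfolding d_def by simp
    then show ?thesis by simp
  qed
  define x where "x = theta - mu_m"
  have "d / (K + 1) \<le> x" using assms(8) unfolding theta_f_def x_def d_def by simp
  then have xf: "d \<le> (K + 1) * x" using K0 by (simp add: pos_divide_le_eq mult.commute)
  have x0: "0 < x"
  proof (rule ccontr)
    assume "\<not> 0 < x"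
    then have "(K + 1) * x \<le> 0" using K0 by (simp add: mult_nonneg_nonpos)
    then show False using xf d0 by simp
  qed
  have "K * d \<le> K * ((K + 1) * x)" using xf K0 by (simp add: mult_left_mono)
  then have "eps * (K + 1) * (K + 1) \<le> K * x * (K + 1)" using key
    by (simp add: power2_eq_square algebra_simps)
  then have ex: "eps * (K + 1) \<le> K * x" using K0 by simp
  have "x * (K + 1) = K * x + x" by (simp add: algebra_simps)
  then have "eps * (K + 1) < x * (K + 1)" using ex x0 by linarith
  then have epsx: "eps < x" using K0 by simp
  have g_nonpos: "g mu_m mu_p eps theta K \<le> 0"
  proof (rule ccontr)
    assume "\<not> g mu_m mu_p eps theta K \<le> 0"
    then have "0 < g mu_m mu_p eps theta K" by simp
    then have Qt: "0 < Q mu_m mu_p eps K theta" using g_pos_iff K0 by blast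
    have "0 < ln K" using assms(4) by simp
    moreover have "0 \<le> (mu_m + eps + eps - mu_p)^2 / K^2" by simp
    moreover have "Q mu_m mu_p eps K (mu_m + eps) = - ((mu_m + eps + eps - mu_p)^2 / K^2) - 2 * ln K"
      unfolding Q_def by simp
    ultimately have Qe: "Q mu_m mu_p eps K (mu_m + eps) < 0" by linarith
    have "0 < Q mu_m mu_p eps K theta_r"
      by (rule Q_convex[OF assms(4) Qt Qe]) (use epsx x_def assms(9) in auto)
    then have gr: "0 < g mu_m mu_p eps theta_r K" using g_pos_iff K0 by blast
    have D: "(R_rob mu_m mu_p K eps has_real_derivative
           (1 / (2 * sqrt (2*pi)) * g mu_m mu_p eps theta_r K)) (at theta_r)"
      using R_rob_deriv[OF K0, of mu_m mu_p eps theta_r] nd_g[OF K0] by simp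
    have "0 < 1 / (2 * sqrt (2*pi)) * g mu_m mu_p eps theta_r K" using gr by simp
    from DERIV_pos_inc_left[OF D this] obtain dl where dl: "0 < dl"
      and dec: "\<And>h. 0 < h \<Longrightarrow> h < dl \<Longrightarrow> R_rob mu_m mu_p K eps (theta_r - h) < R_rob mu_m mu_p K eps theta_r"
      by blast
    define h where "h = min (dl / 2) (theta_r - mu_m)"
    have tr: "0 < theta_r - mu_m" using x0 x_def assms(9) by simp
    have h0: "0 < h" "h < dl" using dl tr unfolding h_def by auto
    have "theta_r - h \<in> {mu_m..mu_p}" using assms(6) h0 tr unfolding h_def by auto
    then have "R_rob mu_m mu_p K eps theta_r \<le> R_rob mu_m mu_p K eps (theta_r - h)" using assms(7) by blast
    with dec[OF h0] show False by simp
  qed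
  define psi where "psi = (\<lambda>s. g mu_m mu_p s theta K * exp (- ((theta - mu_m) * s - s^2/2)))"
  have "psi 0 \<ge> psi eps"
  proof (rule DERIV_nonpos_imp_nonincreasing[OF assms(2)])
    fix s assume s: "0 \<le> s" "s \<le> eps"
    let ?a = "1/K * exp (- ((theta + s - mu_p)^2) / (2 * K^2))"
    let ?e = "exp (- ((theta - mu_m) * s - s^2/2))"
    have Ds: "(psi has_real_derivative ?a * ?e * ((mu_p - theta - s) / K^2 - (theta - mu_m - s))) (at s)"
      unfolding psi_def by (rule psi_deriv) (use K0 in simp)
    have s1: "(K + 1) * s \<le> K * x" using ex s K0
      by (smt (verit) mult_left_mono mult.commute)
    have "0 \<le> (K - 1) * (K * x - (K + 1) * s)" using assms(4) s1 by simp
    moreover have "K^2 * (x - s) - (K * x - s) = (K - 1) * (K * x - (K + 1) * s)"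
      by (simp add: algebra_simps power2_eq_square)
    moreover have "d - x \<le> K * x" using xf by (simp add: algebra_simps)
    ultimately have "d - x - s \<le> K^2 * (x - s)" by linarith
    then have "mu_p - theta - s \<le> K^2 * (theta - mu_m - s)" unfolding d_def x_def by simp
    then have "(mu_p - theta - s) / K^2 \<le> theta - mu_m - s" using K0 by (simp add: pos_divide_le_eq mult.commute)
    then have "?a * ?e * ((mu_p - theta - s) / K^2 - (theta - mu_m - s)) \<le> 0"
      using K0 by (intro mult_nonneg_nonpos) auto
    then show "\<exists>y. (psi has_real_derivative y) (at s) \<and> y \<le> 0" using Ds by blast
  qed
  moreover have "psi 0 = g mu_m mu_p 0 theta K" unfolding psi_def by simp
  moreover have "g mu_m mu_p eps theta K \<le> psi eps"
  proof -
    let ?E = "exp (- ((theta - mu_m) * eps - eps^2/2))"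
    have a: "eps * eps \<le> (theta - mu_m) * eps" using epsx assms(2) unfolding x_def by (simp add: mult_right_mono)
    have b: "0 \<le> (theta - mu_m) * eps" using x0 assms(2) unfolding x_def by simp
    have "0 \<le> (theta - mu_m) * eps - eps^2/2" unfolding power2_eq_square using a b by linarith
    then have "?E \<le> 1" by simp
    then have "g mu_m mu_p eps theta K * (1 - ?E) \<le> 0" using g_nonpos by (simp add: mult_nonpos_nonneg)
    then show ?thesis unfolding psi_def by (simp add: algebra_simps)
  qed
  ultimately show ?thesis by linarith
qed

end
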